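(* Let $\Sigma$ be a finite alphabet and $\mathsf{X} \in \{\mathsf{F},\mathsf{V}\}$. A regular language $L \subseteq \Sigma^*$ belongs to $\mathsf{X}(\mathcal{O}(\log n))$ if and only if $L^\mathsf{R}$ is recognized by a well-behaved DFA.
   Context: $L^\mathsf{R}$ is the set of reversals of words of $L$. A DFA $(Q,\Sigma,q_0,\delta,F)$ is well-behaved if every strongly connected component $C$ (inclusion-maximal set of mutually reachable states) reachable from $q_0$ satisfies: for all $q\in C$ and $u,v\in\Sigma^*$ with $|u|=|v|$ and $\delta(q,u),\delta(q,v)\in C$, $\delta(q,u)\in F\iff\delta(q,v)\in F$. A streaming algorithm is a deterministic (possibly infinite-state) automaton with an injective encoding of states into bit strings. Fixed-size: fix $a\in\Sigma$, $\mathrm{last}_n(a_1\cdots a_m)=a_{m-n+1}\cdots a_m$ if $n\le m$, else $a^{n-m}a_1\cdots a_m$; a fixed-size sliding window algorithm for $L$ is $(\mathcal{A}_n)_{n\ge0}$ with $\mathcal{A}_n$ accepting $\{w:\mathrm{last}_n(w)\in L\}$, space at $n$ = maximal encoding length of a state of $\mathcal{A}_n$. Variable-size: over $\Sigma\cup\{\downarrow\}$, the window is maintained by appending symbols of $\Sigma$ and letting $\downarrow$ delete the first window symbol (if any); an algorithm accepts the streams whose window lies in $L$, and its space at $n$ is the maximal encoding length of a state visited on a stream during which the window length never exceeds $n$. $\mathsf{F}(\mathcal{O}(\log n))$ / $\mathsf{V}(\mathcal{O}(\log n))$: languages with a fixed-size / variable-size algorithm of space $\mathcal{O}(\log n)$.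 *)

theory Defs
  imports Main "HOL-Library.Extended_Nat" Complex_Main
begin

record ('s, 'b) aut =
  states :: "'s set"
  init   :: 's
  trans  :: "'s \<Rightarrow> 'b \<Rightarrow> 's"
  acc    :: "'s set"

definition wf_aut :: "('s, 'b) aut \<Rightarrow> bool" where
  "wf_aut A \<longleftrightarrow> init A \<in> states A \<and> (\<forall>q\<in>states A. \<forall>b. trans A q b \<in> states A)
                 \<and> acc A \<subseteq> states A"

definition run :: "('s, 'b) aut \<Rightarrow> 's \<Rightarrow> 'b list \<Rightarrow> 's" where
  "run A q w = foldl (trans A) q w"

definition lang :: "('s, 'b) aut \<Rightarrow> 'b list set" where
  "lang A = {w. run A (init A) w \<in> acc A}"

definition dfa :: "('s, 'b) aut \<Rightarrow> bool" where
  "dfa A \<longleftrightarrow> wf_aut A \<and> finite (states A)"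

text \<open>Regular: recognised by a DFA (states w.l.o.g. numbered by naturals).\<close>
definition regular :: "'b list set \<Rightarrow> bool" where
  "regular L \<longleftrightarrow> (\<exists>A :: (nat, 'b) aut. dfa A \<and> lang A = L)"

definition rev_lang :: "'b list set \<Rightarrow> 'b list set" where
  "rev_lang L = rev ` L"

definition reach :: "('s, 'b) aut \<Rightarrow> 's \<Rightarrow> 's \<Rightarrow> bool" where
  "reach A p q \<longleftrightarrow> (\<exists>w. run A p w = q)"

definition mutually_reachable :: "('s, 'b) aut \<Rightarrow> 's set \<Rightarrow> bool" where
  "mutually_reachable A C \<longleftrightarrow> (\<forall>p\<in>C. \<forall>q\<in>C. reach A p q)"

definition is_scc :: "('s, 'b) aut \<Rightarrow> 's set \<Rightarrow> bool" where
  "is_scc A C \<longleftrightarrow> C \<subseteq> states A \<and> mutually_reachable A C \<and>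
     (\<forall>D. C \<subseteq> D \<and> D \<subseteq> states A \<and> mutually_reachable A D \<longrightarrow> D = C)"

definition well_behaved :: "('s, 'b) aut \<Rightarrow> bool" where
  "well_behaved A \<longleftrightarrow>
     (\<forall>C. is_scc A C \<and> (\<exists>q\<in>C. reach A (init A) q) \<longrightarrow>
        (\<forall>q\<in>C. \<forall>u v. length u = length v \<and> run A q u \<in> C \<and> run A q v \<in> C \<longrightarrow>
            (run A q u \<in> acc A \<longleftrightarrow> run A q v \<in> acc A)))"

text \<open>States are represented by natural numbers (the state set is
  countable since it injects into bit strings).\<close>
definition streaming_alg :: "(nat, 'b) aut \<Rightarrow> (nat \<Rightarrow> bool list) \<Rightarrow> bool" where
  "streaming_alg A enc \<longleftrightarrow> wf_aut A \<and> inj_on enc (states A)"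

definition O_log :: "(nat \<Rightarrow> enat) \<Rightarrow> bool" where
  "O_log s \<longleftrightarrow> (\<exists>c::real. \<exists>N. \<forall>n\<ge>N. \<exists>k. s n = enat k \<and> real k \<le> c * log 2 (real n))"

definition last_n :: "'b \<Rightarrow> nat \<Rightarrow> 'b list \<Rightarrow> 'b list" where
  "last_n a n w = (if n \<le> length w then drop (length w - n) w
                   else replicate (n - length w) a @ w)"

definition space_fixed :: "(nat, 'b) aut \<Rightarrow> (nat \<Rightarrow> bool list) \<Rightarrow> enat" where
  "space_fixed A enc = Sup ((\<lambda>q. enat (length (enc q))) ` states A)"

definition fixed_sw_alg :: "'b \<Rightarrow> 'b list set \<Rightarrow> (nat \<Rightarrow> (nat, 'b) aut) \<Rightarrow> (nat \<Rightarrow> nat \<Rightarrow> bool list) \<Rightarrow> bool" where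
  "fixed_sw_alg a L As encs \<longleftrightarrow>
     (\<forall>n. streaming_alg (As n) (encs n) \<and> lang (As n) = {w. last_n a n w \<in> L})"

definition F_log :: "'b \<Rightarrow> 'b list set \<Rightarrow> bool" where
  "F_log a L \<longleftrightarrow> (\<exists>As encs. fixed_sw_alg a L As encs \<and>
                     O_log (\<lambda>n. space_fixed (As n) (encs n)))"

text \<open>Input symbols: Some b for b in Sigma, None for the pop symbol.\<close>
definition window :: "'b option list \<Rightarrow> 'b list" where
  "window u = foldl (\<lambda>wd x. case x of Some b \<Rightarrow> wd @ [b] | None \<Rightarrow> tl wd) [] u"

definition var_sw_alg :: "'b list set \<Rightarrow> (nat, 'b option) aut \<Rightarrow> (nat \<Rightarrow> bool list) \<Rightarrow> bool" where
  "var_sw_alg L A enc \<longleftrightarrow> streaming_alg A enc \<and> lang A = {u. window u \<in> L}"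

text \<open>Space at n: maximal encoding length of a state visited on a stream during
  which the window length never exceeds n.\<close>
definition space_var :: "(nat, 'b option) aut \<Rightarrow> (nat \<Rightarrow> bool list) \<Rightarrow> nat \<Rightarrow> enat" where
  "space_var A enc n = Sup ((\<lambda>u. enat (length (enc (run A (init A) u)))) `
      {u. \<forall>v. (\<exists>x. u = v @ x) \<longrightarrow> length (window v) \<le> n})"

definition V_log :: "'b list set \<Rightarrow> bool" where
  "V_log L \<longleftrightarrow> (\<exists>A enc. var_sw_alg L A enc \<and> O_log (space_var A enc))"

end

theory Submission
  imports Defs "HOL-Library.Nat_Bijection" "HOL-Real_Asymp.Real_Asymp"
begin


lemma run_Nil[simp]: "run A q [] = q" by (simp add: run_def)
lemma run_Cons[simp]: "run A q (b # w) = run A (trans A q b) w" by (simp add: run_def)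
lemma run_append: "run A q (u @ v) = run A (run A q u) v" by (simp add: run_def)
lemma run_snoc[simp]: "run A q (u @ [b]) = trans A (run A q u) b" by (simp add: run_def)

lemma run_in_states: "wf_aut A \<Longrightarrow> q \<in> states A \<Longrightarrow> run A q w \<in> states A"
  by (induction w arbitrary: q) (auto simp: wf_aut_def)

lemma reach_refl[simp]: "reach A p p" unfolding reach_def by (rule exI[of _ "[]"]) simp
lemma reach_trans: "reach A p q \<Longrightarrow> reach A q r \<Longrightarrow> reach A p r"
  unfolding reach_def by (metis run_append)
lemma reach_run[simp]: "reach A p (run A p w)" unfolding reach_def by blast

fun listcode :: "nat list \<Rightarrow> nat" where
  "listcode [] = 0"
| "listcode (x # xs) = prod_encode (x, listcode xs)"

lemma listcode_inj: "length xs = length ys \<Longrightarrow> listcode xs = listcode ys \<Longrightarrow> xs = ys"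
proof (induction xs arbitrary: ys)
  case Nil then show ?case by simp
next
  case (Cons x xs)
  then obtain y ys' where ys: "ys = y # ys'" by (cases ys) auto
  with Cons have "prod_encode (x, listcode xs) = prod_encode (y, listcode ys')" by simp
  then have "(x, listcode xs) = (y, listcode ys')" using inj_prod_encode[of UNIV] by (auto dest: injD)
  with Cons ys show ?case by auto
qed

fun lb :: "nat \<Rightarrow> nat \<Rightarrow> nat" where
  "lb 0 B = B"
| "lb (Suc k) B = 4 * (lb k B + 1)^2"

lemma lb_ge: "B \<le> lb k B"
proof (induction k)
  case (Suc k)
  have "lb k B \<le> (lb k B + 1)^2" by (simp add: power2_eq_square)
  then show ?case using Suc by simp
qed simp

lemma lb_mono: "B \<le> B' \<Longrightarrow> lb k B \<le> lb k B'"
  by (induction k) (auto intro!: power_mono)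

lemma prod_encode_le: "a \<le> X \<Longrightarrow> b \<le> X \<Longrightarrow> prod_encode (a, b) \<le> 4 * (X + 1)^2"
proof -
  assume a: "a \<le> X" and b: "b \<le> X"
  have "prod_encode (a,b) = triangle (a+b) + a" by (simp add: prod_encode_def)
  also have "triangle (a+b) \<le> (a+b) * Suc (a+b)" by (simp add: triangle_def)
  also have "(a+b) * Suc (a+b) \<le> (2*X) * Suc (2*X)" using a b by (intro mult_le_mono) auto
  finally show ?thesis using a by (simp add: power2_eq_square algebra_simps)
qed

lemma listcode_le: "(\<forall>a\<in>set xs. a \<le> B) \<Longrightarrow> listcode xs \<le> lb (length xs) B"
proof (induction xs)
  case (Cons x xs)
  then have "x \<le> lb (length xs) B" using lb_ge[of B "length xs"] by simp
  with Cons show ?case using prod_encode_le[of x "lb (length xs) B" "listcode xs"] by auto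
qed simp

lemma lb_bound: "lb k B + 1 \<le> (5 * (B + 1)) ^ (2 ^ k)"
proof -
  have "5 * (lb k B + 1) \<le> (5 * (B + 1)) ^ (2 ^ k)"
  proof (induction k)
    case (Suc k)
    have "5 * (lb (Suc k) B + 1) \<le> (5 * (lb k B + 1))^2"
      by (simp add: power2_eq_square algebra_simps)
    also have "\<dots> \<le> ((5 * (B + 1)) ^ (2 ^ k))^2" using Suc by (intro power_mono) auto
    finally show ?case by (simp add: power_mult[symmetric] mult.commute)
  qed simp
  then show ?thesis by (rule le_trans[rotated]) simp
qed

fun bin :: "nat \<Rightarrow> bool list" where
  "bin n = (if n = 0 then [] else (n mod 2 = 1) # bin (n div 2))"

declare bin.simps[simp del]

lemma bin_inj: "bin m = bin n \<Longrightarrow> m = n"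
proof (induction m arbitrary: n rule: less_induct)
  case (less m)
  show ?case
  proof (cases "m = 0")
    case True with less.prems show ?thesis by (subst (asm) (1 2) bin.simps) (auto split: if_splits)
  next
    case False
    with less.prems have "n \<noteq> 0" by (subst (asm) (1 2) bin.simps) (auto split: if_splits)
    with False less.prems have e: "((m mod 2 = 1) # bin (m div 2)) = ((n mod 2 = 1) # bin (n div 2))"
      by (subst (asm) (1 2) bin.simps) simp
    then have "m mod 2 = n mod 2" by (simp add: mod2_eq_if split: if_splits)
    moreover have "bin (m div 2) = bin (n div 2)" using e by simp
    moreover have "m div 2 = n div 2" using less.IH[of "m div 2" "n div 2"] False calculation(2) by simp
    ultimately show ?thesis by (metis div_mult_mod_eq)
  qed
qed

lemma bin_len_pos: "n > 0 \<Longrightarrow> 2 ^ length (bin n) \<le> 2 * n"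
proof (induction n rule: less_induct)
  case (less n)
  have l: "length (bin n) = Suc (length (bin (n div 2)))" using less.prems by (simp add: bin.simps)
  show ?case
  proof (cases "n div 2 = 0")
    case True
    then have "n = 1" using less.prems by linarith
    then show ?thesis by (simp add: bin.simps)
  next
    case False
    then have "2 ^ length (bin (n div 2)) \<le> 2 * (n div 2)" using less.IH[of "n div 2"] less.prems by simp
    then show ?thesis using l by simp
  qed
qed

lemma bin_len: "2 ^ length (bin n) \<le> 2 * n + 1"
  using bin_len_pos[of n] by (cases "n = 0") (auto simp: bin.simps)

lemma bin_mono: "m \<le> n \<Longrightarrow> length (bin m) \<le> length (bin n)"
proof (induction m arbitrary: n rule: less_induct)
  case (less m)
  show ?case
  proof (cases "m = 0")
    case True then show ?thesis by (simp add: bin.simps)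
  next
    case False
    then have "n \<noteq> 0" using less.prems by auto
    moreover have "length (bin (m div 2)) \<le> length (bin (n div 2))"
      using less.IH[of "m div 2" "n div 2"] False less.prems by (simp add: div_le_mono)
    ultimately show ?thesis using False by (simp add: bin.simps)
  qed
qed



definition sccD :: "('s, 'b) aut \<Rightarrow> 's \<Rightarrow> 's set" where
  "sccD A s = {q. reach A s q \<and> reach A q s}"

lemma is_scc_sccD: assumes "wf_aut A" "s \<in> states A" shows "is_scc A (sccD A s)"
  unfolding is_scc_def
proof (intro conjI allI impI)
  show "sccD A s \<subseteq> states A" using assms run_in_states by (auto simp: sccD_def reach_def)
  show "mutually_reachable A (sccD A s)"
    unfolding mutually_reachable_def sccD_def by (blast intro: reach_trans)
  fix D' assume h: "sccD A s \<subseteq> D' \<and> D' \<subseteq> states A \<and> mutually_reachable A D'"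
  have "s \<in> sccD A s" by (simp add: sccD_def)
  with h have sD: "s \<in> D'" by blast
  with h have "D' \<subseteq> sccD A s" by (auto simp: sccD_def mutually_reachable_def)
  with h show "D' = sccD A s" by blast
qed

lemma reach_take: "i \<le> j \<Longrightarrow> reach A (run A p (take i r)) (run A p (take j r))"
proof -
  assume "i \<le> j"
  then have "take j r = take i r @ drop i (take j r)"
    by (metis append_take_drop_id min.absorb1 take_take)
  then have "run A p (take j r) = run A (run A p (take i r)) (drop i (take j r))"
    by (metis run_append)
  then show ?thesis by (metis reach_run)
qed

lemma run_take_split: "i \<le> j \<Longrightarrow> run A p (take j r) = run A (run A p (take i r)) (drop i (take j r))"
  by (metis append_take_drop_id min.absorb1 take_take run_append)

locale wbD =
  fixes D :: "(nat, 'a) aut" and L :: "'a list set"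
  assumes dfaD: "dfa D" and wbD: "well_behaved D" and langD: "lang D = rev_lang L"
begin

lemma wf: "wf_aut D" and finQ: "finite (states D)" using dfaD by (auto simp: dfa_def)

lemma inL: "x \<in> L \<longleftrightarrow> run D (init D) (rev x) \<in> acc D"
proof -
  have "x \<in> L \<longleftrightarrow> rev x \<in> rev ` L" by (auto simp: image_iff)
  also have "\<dots> \<longleftrightarrow> rev x \<in> lang D" using langD by (simp add: rev_lang_def)
  finally show ?thesis by (simp add: lang_def)
qed

definition pos :: "'a list \<Rightarrow> nat \<Rightarrow> nat set \<Rightarrow> nat \<Rightarrow> bool" where
  "pos r p C i \<longleftrightarrow> i \<le> length r \<and> run D p (take i r) \<in> C"

definition entry :: "'a list \<Rightarrow> nat \<Rightarrow> nat \<Rightarrow> nat list" where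
  "entry r p q' = (if \<exists>i. pos r p (sccD D q') i then
     [1, LEAST i. pos r p (sccD D q') i, GREATEST i. pos r p (sccD D q') i,
      run D p (take (LEAST i. pos r p (sccD D q') i) r)] else [0,0,0,0])"

lemma interval:
  assumes "pos r p (sccD D s) a" "pos r p (sccD D s) b" "a \<le> m" "m \<le> b"
  shows "pos r p (sccD D s) m"
proof -
  have 1: "reach D (run D p (take a r)) (run D p (take m r))" using assms by (intro reach_take)
  have 2: "reach D (run D p (take m r)) (run D p (take b r))" using assms by (intro reach_take)
  from assms have "m \<le> length r" by (auto simp: pos_def)
  with assms 1 2 show ?thesis unfolding pos_def sccD_def by (blast intro: reach_trans)
qed

lemma key:
  assumes p: "p \<in> states D" "reach D (init D) p"
    and eq: "\<forall>q'\<in>states D. entry r p q' = entry r' p q'"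
    and len: "length r = length r'" and j: "j \<le> length r"
  shows "run D p (take j r) \<in> acc D \<longleftrightarrow> run D p (take j r') \<in> acc D"
proof -
  define s where "s = run D p (take j r)"
  define C where "C = sccD D s"
  have sQ: "s \<in> states D" using p wf run_in_states s_def by metis
  have posj: "pos r p C j" using j by (simp add: pos_def C_def s_def sccD_def)
  define i where "i = (LEAST i. pos r p C i)"
  define l where "l = (GREATEST i. pos r p C i)"
  have bnd: "\<forall>y. pos r p C y \<longrightarrow> y \<le> length r" by (simp add: pos_def)
  have posi: "pos r p C i" unfolding i_def using posj by (rule LeastI)
  have posl: "pos r p C l" unfolding l_def using posj by (rule GreatestI_nat[of _ _ "length r"]) (simp add: pos_def)
  have ij: "i \<le> j" unfolding i_def using posj by (rule Least_le)
  have jl: "j \<le> l" unfolding l_def using posj by (rule Greatest_le_nat[of _ _ "length r"]) (simp add: pos_def)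
  have e1: "entry r p s = [1, i, l, run D p (take i r)]"
    using posj unfolding entry_def i_def l_def C_def by auto
  have e2: "entry r' p s = [1, i, l, run D p (take i r)]" using eq sQ e1 by simp
  then have ex': "\<exists>i. pos r' p C i" unfolding entry_def C_def by (auto split: if_splits)
  with e2 have i': "i = (LEAST i. pos r' p C i)" and l': "l = (GREATEST i. pos r' p C i)"
    and ee: "run D p (take i r) = run D p (take i r')"
    unfolding entry_def C_def by auto
  have bnd': "\<forall>y. pos r' p C y \<longrightarrow> y \<le> length r'" by (simp add: pos_def)
  from ex' obtain k where k: "pos r' p C k" by blast
  have posi': "pos r' p C i" unfolding i' using k by (rule LeastI)
  have posl': "pos r' p C l" unfolding l' using k by (rule GreatestI_nat[of _ _ "length r'"]) (simp add: pos_def)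
  have posj': "pos r' p C j" unfolding C_def using posi' posl' ij jl unfolding C_def by (rule interval)
  define e where "e = run D p (take i r)"
  have eC: "e \<in> C" using posi by (simp add: pos_def e_def)
  have scc: "is_scc D C" unfolding C_def using wf sQ by (rule is_scc_sccD)
  have reachs: "reach D (init D) s" unfolding s_def by (rule reach_trans[OF p(2) reach_run])
  have sC: "s \<in> C" by (simp add: C_def sccD_def)
  define u where "u = drop i (take j r)"
  define v where "v = drop i (take j r')"
  have ru: "run D e u = run D p (take j r)" unfolding e_def u_def using ij by (simp add: run_take_split[symmetric])
  have rv: "run D e v = run D p (take j r')" unfolding ee e_def v_def using ij by (simp add: run_take_split[symmetric])
  have luv: "length u = length v" using j len by (simp add: u_def v_def)
  have "run D e u \<in> C" "run D e v \<in> C" using ru rv posj posj' by (auto simp: pos_def s_def)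
  with wbD[unfolded well_behaved_def, rule_format, of C e u v] scc sC reachs eC luv
  have "run D e u \<in> acc D \<longleftrightarrow> run D e v \<in> acc D" by blast
  then show ?thesis using ru rv by simp
qed

definition qs :: "nat list" where "qs = sorted_list_of_set (states D)"

lemma set_qs: "set qs = states D" using finQ by (simp add: qs_def)

definition sl :: "'a list \<Rightarrow> nat list" where
  "sl x = length x # map (\<lambda>(p,q'). listcode (entry (rev x) p q')) (List.product qs qs)"

definition cd :: "'a list \<Rightarrow> nat" where "cd x = listcode (sl x)"

definition E :: "'a list \<Rightarrow> 'a list \<Rightarrow> bool" where
  "E x y \<longleftrightarrow> length x = length y \<and> (\<forall>k\<le>length x. \<forall>z. drop k x @ z \<in> L \<longleftrightarrow> drop k y @ z \<in> L)"

lemma length_entry[simp]: "length (entry r p q) = 4" by (simp add: entry_def)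

lemma sl_E: assumes "sl x = sl y" shows "E x y"
proof -
  have len: "length x = length y" using assms by (simp add: sl_def)
  have "map (\<lambda>(p,q'). listcode (entry (rev x) p q')) (List.product qs qs) =
        map (\<lambda>(p,q'). listcode (entry (rev y) p q')) (List.product qs qs)" using assms by (simp add: sl_def)
  then have "\<forall>p\<in>states D. \<forall>q'\<in>states D. listcode (entry (rev x) p q') = listcode (entry (rev y) p q')"
    by (auto simp: map_eq_conv set_qs)
  then have ent: "\<forall>p\<in>states D. \<forall>q'\<in>states D. entry (rev x) p q' = entry (rev y) p q'"
    by (auto intro: listcode_inj)
  show ?thesis unfolding E_def
  proof (intro conjI allI impI len)
    fix k z assume k: "k \<le> length x"
    define p where "p = run D (init D) (rev z)"
    have pQ: "p \<in> states D" unfolding p_def using wf by (intro run_in_states) (auto simp: wf_aut_def)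
    have pr: "reach D (init D) p" by (simp add: p_def)
    have rx: "rev (drop k x @ z) = rev z @ take (length x - k) (rev x)" by (simp add: rev_drop)
    have ry: "rev (drop k y @ z) = rev z @ take (length x - k) (rev x)" if "False" using that by simp
    have ry: "rev (drop k y @ z) = rev z @ take (length x - k) (rev y)" using len by (simp add: rev_drop)
    have "drop k x @ z \<in> L \<longleftrightarrow> run D p (take (length x - k) (rev x)) \<in> acc D"
      unfolding inL rx run_append p_def ..
    also have "\<dots> \<longleftrightarrow> run D p (take (length x - k) (rev y)) \<in> acc D"
      using key[OF pQ pr bspec[OF ent pQ]] len by simp
    also have "\<dots> \<longleftrightarrow> drop k y @ z \<in> L"
      unfolding inL ry run_append p_def ..
    finally show "drop k x @ z \<in> L \<longleftrightarrow> drop k y @ z \<in> L" .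
  qed
qed

lemma E_refl: "E x x" by (simp add: E_def)
lemma E_sym: "E x y \<Longrightarrow> E y x" by (simp add: E_def)
lemma E_trans: "E x y \<Longrightarrow> E y z \<Longrightarrow> E x z" by (simp add: E_def)
lemma E_L: "E x y \<Longrightarrow> x \<in> L \<longleftrightarrow> y \<in> L" unfolding E_def by (metis append_Nil2 drop0 le0)

lemma E_snoc: assumes "E x y" shows "E (x @ [b]) (y @ [b])"
  unfolding E_def
proof (intro conjI allI impI)
  show "length (x @ [b]) = length (y @ [b])" using assms by (simp add: E_def)
  fix k z assume k: "k \<le> length (x @ [b])"
  show "drop k (x @ [b]) @ z \<in> L \<longleftrightarrow> drop k (y @ [b]) @ z \<in> L"
  proof (cases "k \<le> length x")
    case True
    then have "drop k x @ (b # z) \<in> L \<longleftrightarrow> drop k y @ (b # z) \<in> L" using assms by (simp add: E_def)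
    then show ?thesis using True assms by (simp add: E_def)
  next
    case False
    then show ?thesis using k assms by (simp add: E_def)
  qed
qed

lemma E_tl: assumes "E x y" shows "E (tl x) (tl y)"
proof (cases "x = []")
  case True then show ?thesis using assms by (simp add: E_def)
next
  case False
  then have "y \<noteq> []" using assms by (auto simp: E_def)
  show ?thesis unfolding E_def
  proof (intro conjI allI impI)
    show "length (tl x) = length (tl y)" using assms by (simp add: E_def)
    fix k z assume "k \<le> length (tl x)"
    then have "Suc k \<le> length x" using False by (cases x) auto
    then have "drop (Suc k) x @ z \<in> L \<longleftrightarrow> drop (Suc k) y @ z \<in> L" using assms by (simp add: E_def)
    then show "drop k (tl x) @ z \<in> L \<longleftrightarrow> drop k (tl y) @ z \<in> L" by (simp add: drop_Suc)
  qed
qed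

lemma length_sl: "length (sl x) = Suc (length qs * length qs)" by (simp add: sl_def)

lemma cd_E: "cd x = cd y \<Longrightarrow> E x y"
  unfolding cd_def by (rule sl_E, rule listcode_inj) (simp_all add: length_sl)

definition phi :: "'a list \<Rightarrow> nat" where
  "phi x = (LEAST v. \<exists>y. E y x \<and> v = cd y)"

lemma phi_le: "phi x \<le> cd x"
  unfolding phi_def by (rule Least_le) (blast intro: E_refl)

lemma phi_ex: "\<exists>y. E y x \<and> phi x = cd y"
proof -
  have "\<exists>v y. E y x \<and> v = cd y" by (blast intro: E_refl)
  then show ?thesis unfolding phi_def by (rule LeastI_ex)
qed

lemma phi_eq_iff: "phi x = phi y \<longleftrightarrow> E x y"
proof
  assume h: "phi x = phi y"
  obtain y1 where 1: "E y1 x" "phi x = cd y1" using phi_ex by blast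
  obtain y2 where 2: "E y2 y" "phi y = cd y2" using phi_ex by blast
  have "E y1 y2" using h 1 2 by (intro cd_E) simp
  then show "E x y" using 1 2 by (blast intro: E_trans E_sym)
next
  assume h: "E x y"
  have "(\<lambda>v. \<exists>z. E z x \<and> v = cd z) = (\<lambda>v. \<exists>z. E z y \<and> v = cd z)"
    using h by (auto intro: E_trans E_sym)
  then show "phi x = phi y" unfolding phi_def by simp
qed

definition MQ :: nat where "MQ = Max (states D)"
definition Kc :: nat where "Kc = Suc (length qs * length qs)"
definition bnd :: "nat \<Rightarrow> nat" where "bnd n = lb Kc (lb 4 (max n MQ + 1))"

lemma entry_le: assumes "p \<in> states D" shows "\<forall>a\<in>set (entry r p q). a \<le> max (length r) MQ + 1"
proof (cases "\<exists>i. pos r p (sccD D q) i")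
  case True
  have h3: "run D p w \<le> MQ" for w
    unfolding MQ_def using finQ run_in_states[OF wf assms] by (intro Max_ge) auto
  have h1: "(LEAST i. pos r p (sccD D q) i) \<le> length r"
    using True by (metis LeastI_ex pos_def)
  have h2: "(GREATEST i. pos r p (sccD D q) i) \<le> length r"
    using True by (metis GreatestI_nat pos_def)
  have e: "entry r p q = [1, LEAST i. pos r p (sccD D q) i, GREATEST i. pos r p (sccD D q) i,
      run D p (take (LEAST i. pos r p (sccD D q) i) r)]" using True by (simp add: entry_def)
  show ?thesis unfolding e using h1 h2 h3[of "take (LEAST i. pos r p (sccD D q) i) r"]
    by (auto simp: le_max_iff_disj)
next
  case False then show ?thesis by (simp add: entry_def)
qed

lemma cd_le: "cd x \<le> bnd (length x)"
proof -
  let ?B = "lb 4 (max (length x) MQ + 1)"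
  have "\<forall>a\<in>set (sl x). a \<le> ?B"
  proof
    fix a assume "a \<in> set (sl x)"
    then consider "a = length x" | p q where "p \<in> states D" "a = listcode (entry (rev x) p q)"
      by (auto simp: sl_def set_qs)
    then show "a \<le> ?B"
    proof cases
      case 1 then show ?thesis using lb_ge[of "max (length x) MQ + 1" 4] by simp
    next
      case 2
      have "listcode (entry (rev x) p q) \<le> lb (length (entry (rev x) p q)) (max (length x) MQ + 1)"
        using entry_le[of p "rev x" q] 2 by (intro listcode_le) simp
      then have "a \<le> lb 4 (max (length x) MQ + 1)" using 2 by simp
      then show ?thesis by simp
    qed
  qed
  then have "cd x \<le> lb (length (sl x)) ?B" unfolding cd_def by (rule listcode_le)
  then show ?thesis by (simp add: bnd_def Kc_def length_sl)
qed

lemma bnd_mono: "n \<le> m \<Longrightarrow> bnd n \<le> bnd m"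
  unfolding bnd_def by (intro lb_mono) auto

end


lemma last_n_Nil[simp]: "last_n a n [] = replicate n a" by (simp add: last_n_def)
lemma length_last_n[simp]: "length (last_n a n w) = n" by (simp add: last_n_def)
lemma last_n_snoc: "last_n a n (w @ [b]) = tl (last_n a n w @ [b])"
proof (cases "n \<le> length w")
  case True
  show ?thesis
  proof (cases "n = 0")
    case True then show ?thesis by (simp add: last_n_def)
  next
    case False
    with True have "length w - n < length w" by simp
    then have "drop (length w - n) w \<noteq> []" by simp
    then have "tl (drop (length w - n) w @ [b]) = tl (drop (length w - n) w) @ [b]" by simp
    also have "\<dots> = drop (Suc (length w - n)) w @ [b]" by (simp add: drop_Suc drop_tl)
    finally show ?thesis using True False by (simp add: last_n_def Suc_diff_le)
  qed
next
  case False
  then show ?thesis by (cases "n - length w") (auto simp add: last_n_def Suc_diff_le)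
qed

lemma last_n_foldl: "last_n a n w = foldl (\<lambda>x b. tl (x @ [b])) (replicate n a) w"
  by (induction w rule: rev_induct) (simp_all add: last_n_snoc)

context wbD begin

definition stepv :: "'a list \<Rightarrow> 'a option \<Rightarrow> 'a list" where
  "stepv wd c = (case c of Some b \<Rightarrow> wd @ [b] | None \<Rightarrow> tl wd)"

lemma window_foldl: "window u = foldl stepv [] u"
  unfolding window_def stepv_def ..

lemma E_stepv: "E x y \<Longrightarrow> E (stepv x c) (stepv y c)"
  by (cases c) (auto simp: stepv_def intro: E_snoc E_tl)

lemma some_phi: "E (SOME y. phi y = phi x) x"
proof -
  have "phi (SOME y. phi y = phi x) = phi x" by (rule someI) (rule refl)
  then show ?thesis by (simp add: phi_eq_iff)
qed

definition Av :: "(nat, 'a option) aut" where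
  "Av = \<lparr>states = range phi, init = phi [], trans = (\<lambda>v c. phi (stepv (SOME y. phi y = v) c)),
         acc = {v. \<exists>x. phi x = v \<and> x \<in> L}\<rparr>"

lemma run_Av: "run Av (phi x) u = phi (foldl stepv x u)"
proof (induction u arbitrary: x)
  case (Cons c u)
  have "trans Av (phi x) c = phi (stepv x c)"
    using E_stepv[OF some_phi[of x], of c] by (simp add: Av_def phi_eq_iff)
  then show ?case using Cons by simp
qed simp

lemma acc_phi: "(\<exists>y. phi y = phi x \<and> y \<in> L) \<longleftrightarrow> x \<in> L"
  using E_L phi_eq_iff by blast

lemma var_alg: "var_sw_alg L Av bin"
  unfolding var_sw_alg_def streaming_alg_def
proof (intro conjI)
  show "wf_aut Av" by (auto simp: wf_aut_def Av_def)
  show "inj_on bin (states Av)" by (auto intro: inj_onI bin_inj)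
  show "lang Av = {u. window u \<in> L}"
    unfolding lang_def using run_Av[of "[]"] acc_phi by (auto simp: window_foldl Av_def)
qed

lemma space_var_le: "space_var Av bin n \<le> enat (length (bin (bnd n)))"
  unfolding space_var_def
proof (rule Sup_least, clarsimp)
  fix u :: "'a option list" assume h: "\<forall>v. (\<exists>x. u = v @ x) \<longrightarrow> length (window v) \<le> n"
  then have "length (window u) \<le> n" by (metis append_Nil2)
  have "run Av (init Av) u = phi (window u)" using run_Av[of "[]" u] by (simp add: Av_def window_foldl)
  also have "\<dots> \<le> bnd n" using phi_le[of "window u"] cd_le[of "window u"] bnd_mono[OF \<open>length (window u) \<le> n\<close>] by linarith
  finally show "length (bin (run Av (init Av) u)) \<le> length (bin (bnd n))" by (rule bin_mono)
qed

definition Af :: "'a \<Rightarrow> nat \<Rightarrow> (nat, 'a) aut" where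
  "Af a n = \<lparr>states = phi ` {x. length x = n}, init = phi (replicate n a),
      trans = (\<lambda>v b. phi (tl ((SOME y. phi y = v) @ [b]))),
      acc = {v \<in> phi ` {x. length x = n}. \<exists>x. phi x = v \<and> x \<in> L}\<rparr>"

lemma trans_Af: "trans (Af a n) (phi x) b = phi (tl (x @ [b]))"
  using E_tl[OF E_snoc[OF some_phi[of x], of b]] by (simp add: Af_def phi_eq_iff)

lemma run_Af: "run (Af a n) (phi x) w = phi (foldl (\<lambda>x b. tl (x @ [b])) x w)"
  by (induction w arbitrary: x) (simp_all add: trans_Af)

lemma fixed_alg: "fixed_sw_alg a L (Af a) (\<lambda>_. bin)"
  unfolding fixed_sw_alg_def streaming_alg_def
proof (intro allI conjI)
  fix n
  show "wf_aut (Af a n)" unfolding wf_aut_def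
  proof (intro conjI ballI allI)
    fix q b assume "q \<in> states (Af a n)"
    then obtain x where x: "length x = n" "q = phi x" by (auto simp: Af_def)
    have "length (tl (x @ [b])) = n" using x by simp
    then show "trans (Af a n) q b \<in> states (Af a n)" using x trans_Af[of a n x b] by (simp add: Af_def)
  qed (auto simp: Af_def)
  show "inj_on bin (states (Af a n))" by (auto intro: inj_onI bin_inj)
  show "lang (Af a n) = {w. last_n a n w \<in> L}"
    unfolding lang_def
  proof (intro set_eqI)
    fix w
    have r: "run (Af a n) (init (Af a n)) w = phi (last_n a n w)"
      using run_Af[of a n "replicate n a" w] by (simp add: Af_def last_n_foldl)
    have m: "phi (last_n a n w) \<in> phi ` {x. length x = n}" by simp
    have "run (Af a n) (init (Af a n)) w \<in> acc (Af a n) \<longleftrightarrow> last_n a n w \<in> L"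
      unfolding r using acc_phi[of "last_n a n w"] m by (simp add: Af_def)
    then show "w \<in> {w. run (Af a n) (init (Af a n)) w \<in> acc (Af a n)} \<longleftrightarrow> w \<in> {w. last_n a n w \<in> L}"
      by simp
  qed
qed

lemma space_fixed_le: "space_fixed (Af a n) bin \<le> enat (length (bin (bnd n)))"
  unfolding space_fixed_def
proof (rule Sup_least)
  fix y assume "y \<in> (\<lambda>q. enat (length (bin q))) ` states (Af a n)"
  then obtain x where x: "length x = n" "y = enat (length (bin (phi x)))" by (auto simp: Af_def)
  then have "phi x \<le> bnd n" using phi_le[of x] cd_le[of x] by simp
  then show "y \<le> enat (length (bin (bnd n)))" using x bin_mono by simp
qed

lemma bnd_poly: "\<exists>e N. \<forall>n\<ge>N. 2 * bnd n + 1 \<le> n ^ e"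
proof -
  define e :: nat where "e = 2 * (17 * 2 ^ Kc + 1)"
  have "2 * bnd n + 1 \<le> n ^ e" if n: "n \<ge> max 7 MQ" for n
  proof -
    define B0 where "B0 = max n MQ + 1"
    define Y where "Y = 5 * (B0 + 1)"
    have B0: "B0 = n + 1" using n by (simp add: B0_def)
    have Y5: "5 \<le> Y" by (simp add: Y_def)
    have h7: "7 \<le> n" using n by simp
    then have "7 * n \<le> n * n" by (rule mult_le_mono1)
    moreover have "5 * (n + 1 + 1) \<le> 7 * n" using h7 by simp
    ultimately have "5 * (n + 1 + 1) \<le> n * n" by (rule le_trans[rotated])
    then have "Y \<le> n ^ 2" unfolding Y_def B0 power2_eq_square .
    have b1: "lb 4 B0 + 1 \<le> Y ^ 16" using lb_bound[of 4 B0] by (simp add: Y_def)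
    have "5 * (lb 4 B0 + 1) \<le> Y ^ 17"
    proof -
      have "5 * (lb 4 B0 + 1) \<le> Y * Y ^ 16" using b1 Y5 by (intro mult_le_mono) auto
      then show ?thesis by (simp add: power_Suc[symmetric] del: power_Suc)
    qed
    then have "(5 * (lb 4 B0 + 1)) ^ (2 ^ Kc) \<le> (Y ^ 17) ^ (2 ^ Kc)" by (rule power_mono) simp
    moreover have "bnd n + 1 \<le> (5 * (lb 4 B0 + 1)) ^ (2 ^ Kc)"
      using lb_bound[of Kc "lb 4 B0"] unfolding bnd_def B0_def by simp
    ultimately have Z: "bnd n + 1 \<le> (Y ^ 17) ^ (2 ^ Kc)" by (rule le_trans[rotated])
    have "2 * (Y ^ 17) ^ (2 ^ Kc) \<le> Y * (Y ^ 17) ^ (2 ^ Kc)" using Y5 by (intro mult_le_mono1) simp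
    then have "2 * bnd n + 1 \<le> Y * (Y ^ 17) ^ (2 ^ Kc)" using Z by linarith
    also have "\<dots> = Y ^ (17 * 2 ^ Kc + 1)" by (simp add: power_mult[symmetric] power_add mult.commute)
    also have "\<dots> \<le> (n ^ 2) ^ (17 * 2 ^ Kc + 1)" using \<open>Y \<le> n ^ 2\<close> by (rule power_mono) simp
    also have "\<dots> = n ^ e" unfolding e_def by (simp only: power_mult)
    finally show ?thesis .
  qed
  then show ?thesis by blast
qed

lemma len_bin_log: "O_log (\<lambda>n. enat (length (bin (bnd n))))"
proof -
  obtain e N :: nat where eN: "\<forall>n\<ge>N. 2 * bnd n + 1 \<le> n ^ e" using bnd_poly by blast
  have "real (length (bin (bnd n))) \<le> real e * log 2 (real n)" if n: "n \<ge> max N 1" for n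
  proof -
    have "2 ^ length (bin (bnd n)) \<le> n ^ e" using bin_len[of "bnd n"] eN n by (meson le_trans max.boundedE)
    then have "real (2 ^ length (bin (bnd n))) \<le> real (n ^ e)" by linarith
    then have "log 2 (2 ^ length (bin (bnd n))) \<le> log 2 (real n ^ e)"
      using n by (subst log_le_cancel_iff) auto
    then show ?thesis using n by (simp add: log_nat_power)
  qed
  then show ?thesis unfolding O_log_def by (intro exI[of _ "real e"] exI[of _ "max N 1"]) auto
qed

lemma O_log_mono: assumes f: "O_log f" and le: "\<And>n. g n \<le> f n" shows "O_log g"
proof -
  obtain c N where h: "\<forall>n\<ge>N. \<exists>k. f n = enat k \<and> real k \<le> c * log 2 (real n)"
    using f unfolding O_log_def by blast
  have "\<exists>k. g n = enat k \<and> real k \<le> c * log 2 (real n)" if n: "N \<le> n" for n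
  proof -
    obtain k where k: "f n = enat k" "real k \<le> c * log 2 (real n)" using h n by blast
    then obtain k' where k': "g n = enat k'" using le[of n] by (metis enat_ile)
    then have "k' \<le> k" using le[of n] k by simp
    then show ?thesis using k k' by force
  qed
  then show ?thesis unfolding O_log_def by blast
qed

theorem F_log_upper: "F_log a L"
  unfolding F_log_def
  by (intro exI[of _ "Af a"] exI[of _ "\<lambda>_. bin"] conjI fixed_alg O_log_mono[OF len_bin_log] space_fixed_le)

theorem V_log_upper: "V_log L"
  unfolding V_log_def
  by (intro exI[of _ Av] exI[of _ bin] conjI var_alg O_log_mono[OF len_bin_log] space_var_le)

end


lemma lin_log: assumes m: "0 < m" shows "\<exists>k\<ge>K. c * log 2 (real (d + k * m)) < real k"
proof -
  have "filterlim (\<lambda>k::nat. real k - c * log 2 (real d + real k * real m)) at_top at_top"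
    using m by real_asymp
  then have "eventually (\<lambda>k::nat. 1 \<le> real k - c * log 2 (real d + real k * real m)) at_top"
    by (simp add: filterlim_at_top)
  then obtain N where "\<forall>k\<ge>N. 1 \<le> real k - c * log 2 (real d + real k * real m)"
    by (auto simp: eventually_at_top_linorder)
  then have "1 \<le> real (max K N) - c * log 2 (real d + real (max K N) * real m)" by simp
  then have "c * log 2 (real (d + max K N * m)) < real (max K N)" by simp
  then show ?thesis by (intro exI[of _ "max K N"]) simp
qed

lemma sum_pow2_less: "(\<Sum>i\<le>j. (2::nat) ^ i) < 2 ^ Suc j"
  by (induction j) auto

lemma many_long:
  fixes f :: "'s \<Rightarrow> bool list"
  assumes inj: "inj_on f T" and card: "card T = 2 ^ k"
  shows "\<exists>t\<in>T. k \<le> length (f t)"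
proof (rule ccontr)
  assume a: "\<not> ?thesis"
  have fin: "finite T" using card by (intro card_ge_0_finite) simp
  have "T \<noteq> {}" using card by auto
  then have k: "k > 0" using a by (cases k) auto
  have sub: "f ` T \<subseteq> {xs. set xs \<subseteq> UNIV \<and> length xs \<le> k - 1}"
    using a k by force
  have "2 ^ k = card (f ` T)" using card inj by (simp add: card_image)
  also have "\<dots> \<le> card {xs :: bool list. set xs \<subseteq> UNIV \<and> length xs \<le> k - 1}"
    by (rule card_mono[OF finite_lists_length_le sub]) simp
  also have "\<dots> = (\<Sum>i\<le>k-1. 2 ^ i)" by (subst card_lists_length_le) auto
  also have "\<dots> < 2 ^ Suc (k - 1)" by (rule sum_pow2_less)
  finally show False using k by simp
qed

lemma card_bool_lists: "card {bs :: bool list. length bs = k} = 2 ^ k"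
  using card_lists_length_eq[of "UNIV :: bool set" k] by simp

definition windowF :: "'b list \<Rightarrow> 'b option list \<Rightarrow> 'b list" where
  "windowF x u = foldl (\<lambda>wd x. case x of Some b \<Rightarrow> wd @ [b] | None \<Rightarrow> tl wd) x u"

lemma window_F: "window u = windowF [] u" by (simp add: window_def windowF_def)
lemma windowF_append: "windowF x (u @ v) = windowF (windowF x u) v" by (simp add: windowF_def)
lemma windowF_Some: "windowF x (map Some y) = x @ y"
  by (induction y arbitrary: x) (simp_all add: windowF_def)
lemma windowF_None: "windowF x (replicate p None) = drop p x"
  by (induction p arbitrary: x) (simp_all add: windowF_def drop_Suc)

lemma inL_gen: "lang D = rev_lang L \<Longrightarrow> x \<in> L \<longleftrightarrow> run D (init D) (rev x) \<in> acc D"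
proof -
  assume l: "lang D = rev_lang L"
  have "x \<in> L \<longleftrightarrow> rev x \<in> rev ` L" by (auto simp: image_iff)
  also have "\<dots> \<longleftrightarrow> rev x \<in> lang D" using l by (simp add: rev_lang_def)
  finally show ?thesis by (simp add: lang_def)
qed

locale viol =
  fixes D :: "(nat, 'a) aut" and L :: "'a list set" and z P Q :: "'a list" and l :: nat
  assumes langD: "lang D = rev_lang L"
    and lenPQ: "length Q = length P" and lP: "l \<le> length P"
    and loopP: "run D (run D (init D) z) P = run D (init D) z"
    and loopQ: "run D (run D (init D) z) Q = run D (init D) z"
    and diff: "(run D (run D (init D) z) (take l P) \<in> acc D) \<noteq> (run D (run D (init D) z) (take l Q) \<in> acc D)"
begin

abbreviation q0 where "q0 \<equiv> run D (init D) z"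
abbreviation m where "m \<equiv> length P"
definition blk :: "bool \<Rightarrow> 'a list" where "blk b = (if b then P else Q)"
definition W :: "bool list \<Rightarrow> 'a list" where "W bs = concat (map blk bs)"
definition S :: "bool list \<Rightarrow> 'a list" where "S bs = rev (W bs)"
definition Y :: "nat \<Rightarrow> 'a list" where "Y c = rev (z @ concat (replicate c P))"
definition NN :: "nat \<Rightarrow> nat" where "NN k = length z + (k - 1) * m + l"

lemma m_pos: "0 < m"
proof (rule ccontr)
  assume "\<not> 0 < m"
  then have "take l P = take l Q" using lenPQ lP by simp
  then show False using diff by simp
qed

lemma len_blk[simp]: "length (blk b) = m" using lenPQ by (simp add: blk_def)
lemma len_W[simp]: "length (W bs) = length bs * m" by (induction bs) (simp_all add: W_def)
lemma run_W: "run D q0 (W bs) = q0"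
  by (induction bs) (simp_all add: W_def run_append blk_def loopP loopQ)
lemma run_Pc: "run D q0 (concat (replicate c P)) = q0"
  by (induction c) (simp_all add: run_append loopP)

lemma take_W: "i < length bs \<Longrightarrow> take (i * m + l) (W bs) = W (take i bs) @ take l (blk (bs ! i))"
proof (induction bs arbitrary: i)
  case (Cons b bs)
  show ?case
  proof (cases i)
    case 0 then show ?thesis using lP by (simp add: W_def)
  next
    case (Suc i')
    then have "take (i * m + l) (W (b # bs)) = blk b @ take (i' * m + l) (W bs)"
      by (simp add: W_def take_append)
    then show ?thesis using Cons Suc by (simp add: W_def)
  qed
qed simp

lemma memb:
  assumes len: "length bs = k" and i: "i < k"
  shows "drop (length (S bs @ Y (k - 1 - i)) - NN k) (S bs @ Y (k - 1 - i)) \<in> L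
     \<longleftrightarrow> run D q0 (take l (blk (bs ! i))) \<in> acc D"
proof -
  define c where "c = k - 1 - i"
  define w where "w = S bs @ Y c"
  have kk: "(k - 1) * m = c * m + i * m" using i by (simp add: c_def add_mult_distrib[symmetric])
  have lw: "length w = length z + c * m + k * m" using len by (simp add: w_def S_def Y_def length_concat sum_list_replicate)
  have "NN k \<le> length w" unfolding lw NN_def
  proof -
    have "(k - 1) * m + l \<le> (k - 1) * m + m" using lP by simp
    also have "\<dots> = k * m" using i by (cases k) auto
    finally show "length z + (k - 1) * m + l \<le> length z + c * m + k * m" by simp
  qed
  then have "rev (drop (length w - NN k) w) = take (NN k) (rev w)"
    by (simp add: rev_drop)
  also have "rev w = z @ concat (replicate c P) @ W bs" by (simp add: w_def S_def Y_def)
  also have "take (NN k) \<dots> = z @ concat (replicate c P) @ take (i * m + l) (W bs)"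
    unfolding NN_def kk by (simp add: take_append length_concat sum_list_replicate)
  also have "\<dots> = z @ concat (replicate c P) @ W (take i bs) @ take l (blk (bs ! i))"
    using take_W[of i bs] i len by simp
  finally have "run D (init D) (rev (drop (length w - NN k) w)) = run D q0 (take l (blk (bs ! i)))"
    by (simp add: run_append run_Pc run_W)
  then show ?thesis unfolding w_def c_def using inL_gen[OF langD] by simp
qed

lemma dist:
  assumes "length bs = k" "length bs' = k" "bs \<noteq> bs'"
  shows "\<exists>c. (drop (length (S bs @ Y c) - NN k) (S bs @ Y c) \<in> L) \<noteq>
             (drop (length (S bs' @ Y c) - NN k) (S bs' @ Y c) \<in> L)"
proof -
  have "\<exists>i<k. bs ! i \<noteq> bs' ! i" using assms by (auto simp: list_eq_iff_nth_eq)
  then obtain i where i: "i < k" "bs ! i \<noteq> bs' ! i" by blast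
  have "{blk (bs ! i), blk (bs' ! i)} = {P, Q}" using i(2) by (cases "bs ! i") (auto simp: blk_def)
  then have "(run D q0 (take l (blk (bs ! i))) \<in> acc D) \<noteq> (run D q0 (take l (blk (bs' ! i))) \<in> acc D)"
    using diff by (cases "bs ! i"; cases "bs' ! i") (auto simp: blk_def)
  then show ?thesis using memb[OF assms(1) i(1)] memb[OF assms(2) i(1)] by blast
qed

lemma len_S[simp]: "length (S bs) = length bs * m" by (simp add: S_def)

lemma NN_le: assumes "length bs = k" "k \<ge> 1" shows "NN k \<le> length (S bs @ Y c)"
proof -
  have "(k - 1) * m + l \<le> (k - 1) * m + m" using lP by simp
  also have "\<dots> = k * m" using assms(2) by (cases k) auto
  finally show ?thesis using assms(1) by (simp add: NN_def Y_def)
qed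

lemma NN_ge: "k - 1 \<le> NN k"
proof -
  have m1: "1 \<le> m" using m_pos by linarith
  have "(k - 1) * 1 \<le> (k - 1) * m" using m1 by (rule mult_le_mono2)
  then have "k - 1 \<le> (k - 1) * m" by (simp only: mult_1_right)
  then show ?thesis unfolding NN_def by linarith
qed

lemma NN_upper: "NN k \<le> length z + m + k * m"
proof -
  have "(k - 1) * m \<le> k * m" by simp
  then show ?thesis using lP unfolding NN_def by linarith
qed

lemma not_F: "\<not> F_log a L"
proof
  assume "F_log a L"
  then obtain As encs where alg: "fixed_sw_alg a L As encs" and ol: "O_log (\<lambda>n. space_fixed (As n) (encs n))"
    unfolding F_log_def by blast
  obtain c N where cN: "\<forall>n\<ge>N. \<exists>s. space_fixed (As n) (encs n) = enat s \<and> real s \<le> c * log 2 (real n)"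
    using ol unfolding O_log_def by blast
  have bound: "real k \<le> max c 0 * log 2 (real (length z + m + k * m))" if k: "k \<ge> N + 2" for k
  proof -
    define n where "n = NN k"
    have nN: "N \<le> n" "1 \<le> n" using NN_ge[of k] k unfolding n_def by auto
    define B where "B = {bs :: bool list. length bs = k}"
    define st where "st bs = run (As n) (init (As n)) (S bs)" for bs
    have wfA: "wf_aut (As n)" and injE: "inj_on (encs n) (states (As n))"
      and langA: "lang (As n) = {w. last_n a n w \<in> L}"
      using alg by (auto simp: fixed_sw_alg_def streaming_alg_def)
    have inj: "inj_on st B"
    proof (rule inj_onI, rule ccontr)
      fix bs bs' assume h: "bs \<in> B" "bs' \<in> B" "st bs = st bs'" "bs \<noteq> bs'"
      obtain cc where cc: "(drop (length (S bs @ Y cc) - n) (S bs @ Y cc) \<in> L) \<noteq>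
             (drop (length (S bs' @ Y cc) - n) (S bs' @ Y cc) \<in> L)"
        using dist[of bs k bs'] h unfolding B_def n_def by auto
      have ln: "last_n a n (S b @ Y cc) = drop (length (S b @ Y cc) - n) (S b @ Y cc)" if "b \<in> B" for b
        using NN_le[of b k cc] that k unfolding B_def n_def last_n_def by auto
      have "run (As n) (init (As n)) (S bs @ Y cc) = run (As n) (init (As n)) (S bs' @ Y cc)"
        using h(3) by (simp add: st_def run_append)
      then have "(S bs @ Y cc \<in> lang (As n)) = (S bs' @ Y cc \<in> lang (As n))" by (simp add: lang_def)
      then show False using cc ln[OF h(1)] ln[OF h(2)] langA by simp
    qed
    have cardB: "card (st ` B) = 2 ^ k" using inj card_bool_lists by (simp add: card_image B_def)
    have stS: "st ` B \<subseteq> states (As n)"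
      using wfA by (auto simp: st_def wf_aut_def intro!: run_in_states)
    have "inj_on (encs n) (st ` B)" using injE stS by (rule inj_on_subset)
    then obtain t where t: "t \<in> st ` B" "k \<le> length (encs n t)" using many_long cardB by blast
    have "enat (length (encs n t)) \<le> space_fixed (As n) (encs n)"
      unfolding space_fixed_def using t stS by (intro Sup_upper) auto
    moreover obtain s where s: "space_fixed (As n) (encs n) = enat s" "real s \<le> c * log 2 (real n)"
      using cN nN by blast
    ultimately have "k \<le> s" using t by simp
    then have "real k \<le> c * log 2 (real n)" using s by linarith
    also have "\<dots> \<le> max c 0 * log 2 (real n)" using nN by (intro mult_right_mono) auto
    also have "\<dots> \<le> max c 0 * log 2 (real (length z + m + k * m))"
    proof (intro mult_left_mono)
      have "real n \<le> real (length z + m + k * m)" using NN_upper[of k] unfolding n_def by linarith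
      then show "log 2 (real n) \<le> log 2 (real (length z + m + k * m))" using nN by (subst log_le_cancel_iff) auto
    qed simp
    finally show ?thesis .
  qed
  obtain k where "k \<ge> N + 2" "max c 0 * log 2 (real (length z + m + k * m)) < real k"
    using lin_log[OF m_pos] by blast
  with bound show False by fastforce
qed

lemma window_map_Some[simp]: "window (map Some w) = w" by (simp add: window_F windowF_Some)

lemma not_V: "\<not> V_log L"
proof
  assume "V_log L"
  then obtain A enc where alg: "var_sw_alg L A enc" and ol: "O_log (space_var A enc)"
    unfolding V_log_def by blast
  obtain c N where cN: "\<forall>n\<ge>N. \<exists>s. space_var A enc n = enat s \<and> real s \<le> c * log 2 (real n)"
    using ol unfolding O_log_def by blast
  have wfA: "wf_aut A" and injE: "inj_on enc (states A)"
    and langA: "lang A = {u. window u \<in> L}"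
    using alg by (auto simp: var_sw_alg_def streaming_alg_def)
  have bound: "real k \<le> max c 0 * log 2 (real (0 + k * m))" if k: "k \<ge> N + 2" for k
  proof -
    define n where "n = k * m"
    have m1: "1 \<le> m" using m_pos by linarith
    have "k * 1 \<le> k * m" using m1 by (rule mult_le_mono2)
    then have "k \<le> k * m" by (simp only: mult_1_right)
    then have nN: "N \<le> n" "1 \<le> n" using k unfolding n_def by linarith+
    define B where "B = {bs :: bool list. length bs = k}"
    define st where "st bs = run A (init A) (map Some (S bs))" for bs
    have inj: "inj_on st B"
    proof (rule inj_onI, rule ccontr)
      fix bs bs' assume h: "bs \<in> B" "bs' \<in> B" "st bs = st bs'" "bs \<noteq> bs'"
      obtain cc where cc: "(drop (length (S bs @ Y cc) - NN k) (S bs @ Y cc) \<in> L) \<noteq>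
             (drop (length (S bs' @ Y cc) - NN k) (S bs' @ Y cc) \<in> L)"
        using dist[of bs k bs'] h unfolding B_def by auto
      define p where "p = length (S bs @ Y cc) - NN k"
      have pp: "p = length (S bs' @ Y cc) - NN k" using h unfolding p_def B_def by simp
      have wn: "window (map Some (S b) @ map Some (Y cc) @ replicate p None) = drop p (S b @ Y cc)" for b
        by (simp add: window_F windowF_append windowF_Some windowF_None)
      have "run A (init A) (map Some (S bs) @ map Some (Y cc) @ replicate p None)
          = run A (init A) (map Some (S bs') @ map Some (Y cc) @ replicate p None)"
        using h(3) by (simp add: st_def run_append[of A "init A" "map Some (S _)"])
      then have "(map Some (S bs) @ map Some (Y cc) @ replicate p None \<in> lang A) =
                 (map Some (S bs') @ map Some (Y cc) @ replicate p None \<in> lang A)" by (simp add: lang_def)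
      then show False using cc langA wn unfolding p_def[symmetric] pp[symmetric] by simp
    qed
    have cardB: "card (st ` B) = 2 ^ k" using inj card_bool_lists by (simp add: card_image B_def)
    have stS: "st ` B \<subseteq> states A"
      using wfA by (auto simp: st_def wf_aut_def intro!: run_in_states)
    have "inj_on enc (st ` B)" using injE stS by (rule inj_on_subset)
    then obtain t where t: "t \<in> st ` B" "k \<le> length (enc t)" using many_long cardB by blast
    then obtain bs where bs: "bs \<in> B" "t = st bs" by blast
    have pre: "length (window v) \<le> n" if "map Some (S bs) = v @ x" for v x
    proof -
      have "v = take (length v) (map Some (S bs))" using that by simp
      then have "v = map Some (take (length v) (S bs))" by (simp add: take_map)
      then have "window v = take (length v) (S bs)" by (metis window_map_Some)
      then show ?thesis using bs unfolding B_def n_def by simp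
    qed
    have "enat (length (enc t)) \<le> space_var A enc n"
      unfolding space_var_def using pre bs by (intro Sup_upper) (auto simp: st_def)
    moreover obtain s where s: "space_var A enc n = enat s" "real s \<le> c * log 2 (real n)"
      using cN nN by blast
    ultimately have "k \<le> s" using t by simp
    then have "real k \<le> c * log 2 (real n)" using s by linarith
    also have "\<dots> \<le> max c 0 * log 2 (real n)" using nN by (intro mult_right_mono) auto
    finally show ?thesis by (simp add: n_def)
  qed
  obtain k where "k \<ge> N + 2" "max c 0 * log 2 (real (0 + k * m)) < real k"
    using lin_log[OF m_pos] by blast
  with bound show False by fastforce
qed

end



lemma not_wb_viol:
  assumes "\<not> well_behaved D"
  shows "\<exists>z P Q l. length Q = length P \<and> l \<le> length P
    \<and> run D (run D (init D) z) P = run D (init D) z \<and> run D (run D (init D) z) Q = run D (init D) z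
    \<and> (run D (run D (init D) z) (take l P) \<in> acc D) \<noteq> (run D (run D (init D) z) (take l Q) \<in> acc D)"
proof -
  obtain C q0' q u v where C: "is_scc D C" "q0' \<in> C" "reach D (init D) q0'" "q \<in> C"
    and uv: "length u = length v" "run D q u \<in> C" "run D q v \<in> C"
    and ne: "\<not> (run D q u \<in> acc D \<longleftrightarrow> run D q v \<in> acc D)"
    using assms unfolding well_behaved_def by blast
  have mr: "mutually_reachable D C" using C(1) by (simp add: is_scc_def)
  have "reach D (init D) q" using C mr unfolding mutually_reachable_def by (blast intro: reach_trans)
  then obtain z where z: "run D (init D) z = q" by (auto simp: reach_def)
  obtain r1 where r1: "run D (run D q u) r1 = q" using mr uv C(4) unfolding mutually_reachable_def reach_def by blast
  obtain r2 where r2: "run D (run D q v) r2 = q" using mr uv C(4) unfolding mutually_reachable_def reach_def by blast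
  define P where "P = (u @ r1) @ (v @ r2)"
  define Q where "Q = (v @ r2) @ (u @ r1)"
  have lu: "run D q (u @ r1) = q" and lv: "run D q (v @ r2) = q" using r1 r2 by (simp_all add: run_append)
  have tP: "take (length u) P = u" by (simp add: P_def)
  have tQ: "take (length u) Q = v" using uv(1) by (simp add: Q_def)
  show ?thesis
    by (rule exI[of _ z], rule exI[of _ P], rule exI[of _ Q], rule exI[of _ "length u"])
       (use z lu lv tP tQ ne in \<open>auto simp: P_def Q_def run_append\<close>)
qed

lemma regular_rev:
  assumes "regular L" shows "\<exists>D :: (nat, 'a) aut. dfa D \<and> lang D = rev_lang L"
proof -
  obtain A :: "(nat, 'a) aut" where A: "dfa A" "lang A = L" using assms by (auto simp: regular_def)
  have wfA: "wf_aut A" and finA: "finite (states A)" using A by (auto simp: dfa_def)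
  define D :: "(nat, 'a) aut" where "D = \<lparr>states = set_encode ` Pow (states A), init = set_encode (acc A),
     trans = (\<lambda>v b. set_encode {q \<in> states A. trans A q b \<in> set_decode v}),
     acc = {v \<in> set_encode ` Pow (states A). init A \<in> set_decode v}\<rparr>"
  have fin: "finite S" if "S \<subseteq> states A" for S using finA that by (rule finite_subset[rotated])
  have accA: "acc A \<subseteq> states A" using wfA by (simp add: wf_aut_def)
  have runD: "run D (set_encode S0) w = set_encode {q \<in> states A. run A q (rev w) \<in> S0}"
    if S0: "S0 \<subseteq> states A" for S0 w
  proof (induction w rule: rev_induct)
    case Nil then show ?case using S0 by (simp add: Int_absorb1[symmetric] Collect_conj_eq) (metis (no_types, lifting) Collect_mem_eq Int_absorb1 Int_def)
  next
    case (snoc b w)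
    have "run D (set_encode S0) (w @ [b]) = set_encode {q \<in> states A. trans A q b \<in> {q \<in> states A. run A q (rev w) \<in> S0}}"
      using snoc fin[of "{q \<in> states A. run A q (rev w) \<in> S0}"] by (simp add: D_def)
    also have "{q \<in> states A. trans A q b \<in> {q \<in> states A. run A q (rev w) \<in> S0}} = {q \<in> states A. run A q (rev (w @ [b])) \<in> S0}"
      using wfA by (auto simp: wf_aut_def)
    finally show ?case .
  qed
  have "dfa D" unfolding dfa_def wf_aut_def
    using accA finA by (auto simp: D_def)
  moreover have "lang D = rev_lang L"
  proof (rule set_eqI)
    fix w
    have "run D (init D) w = set_encode {q \<in> states A. run A q (rev w) \<in> acc A}"
      using runD[OF accA] by (simp add: D_def)
    then have "w \<in> lang D \<longleftrightarrow> init A \<in> {q \<in> states A. run A q (rev w) \<in> acc A}"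
      using fin[of "{q \<in> states A. run A q (rev w) \<in> acc A}"] by (auto simp: lang_def D_def)
    also have "\<dots> \<longleftrightarrow> rev w \<in> L" using wfA A(2) by (auto simp: wf_aut_def lang_def)
    also have "\<dots> \<longleftrightarrow> w \<in> rev_lang L" unfolding rev_lang_def by (metis image_iff rev_rev_ident)
    finally show "w \<in> lang D \<longleftrightarrow> w \<in> rev_lang L" .
  qed
  ultimately show ?thesis by blast
qed

theorem corollary5p4:
  fixes L :: "('a::finite) list set" and a :: 'a
  assumes "regular L"
  shows "(F_log a L \<longleftrightarrow> (\<exists>D :: (nat, 'a) aut. dfa D \<and> well_behaved D \<and> lang D = rev_lang L))
       \<and> (V_log L \<longleftrightarrow> (\<exists>D :: (nat, 'a) aut. dfa D \<and> well_behaved D \<and> lang D = rev_lang L))"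
proof -
  obtain D0 :: "(nat, 'a) aut" where D0: "dfa D0" "lang D0 = rev_lang L" using regular_rev[OF assms] by blast
  have up: "F_log a L \<and> V_log L" if "\<exists>D :: (nat, 'a) aut. dfa D \<and> well_behaved D \<and> lang D = rev_lang L"
  proof -
    from that obtain D :: "(nat, 'a) aut" where "dfa D" "well_behaved D" "lang D = rev_lang L" by blast
    then interpret wbD D L by unfold_locales
    show ?thesis using F_log_upper V_log_upper by blast
  qed
  have wb: "well_behaved D0" if "F_log a L \<or> V_log L"
  proof (rule ccontr)
    assume "\<not> well_behaved D0"
    then obtain z P Q l where v: "length Q = length P" "l \<le> length P"
      "run D0 (run D0 (init D0) z) P = run D0 (init D0) z" "run D0 (run D0 (init D0) z) Q = run D0 (init D0) z"
      "(run D0 (run D0 (init D0) z) (take l P) \<in> acc D0) \<noteq> (run D0 (run D0 (init D0) z) (take l Q) \<in> acc D0)"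
      using not_wb_viol by blast
    interpret viol D0 L z P Q l using v D0 by unfold_locales
    show False using that not_F not_V by blast
  qed
  show ?thesis using up wb D0 by blast
qed


end
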